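(* Let $a,b\colon\mathbb N\to\mathbb Z\setminus\{0\}$ be injective sequences and let $F\subset\mathbb N$ be arbitrary. Then there exist a probability space $(X,\mathcal X,\mu)$, measure preserving transformations $T,S\colon X\to X$, both Bernoulli, and $A\in\mathcal X$ such that for every $n\in\mathbb N$, $$\mu(T^{-a(n)}A\cap S^{-b(n)}A)=\begin{cases}0 & \text{if } n\in F,\\ 1/4 & \text{if } n\notin F.\end{cases}$$
   Context: A measure preserving transformation $T$ of $(X,\mathcal X,\mu)$ is called Bernoulli if $(X,\mathcal X,\mu,T)$ is isomorphic to a (two-sided) Bernoulli shift on finitely many symbols; in particular it is invertible. *)

theory Defs
  imports "HOL-Probability.Probability"
begin

definition mpt :: "'a measure \<Rightarrow> ('a \<Rightarrow> 'a) \<Rightarrow> bool" where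
  "mpt M T \<longleftrightarrow> T \<in> measurable M M \<and> distr M M T = M"

definition invertible_mpt :: "'a measure \<Rightarrow> ('a \<Rightarrow> 'a) \<Rightarrow> bool" where
  "invertible_mpt M T \<longleftrightarrow> mpt M T \<and> bij_betw T (space M) (space M)
     \<and> mpt M (inv_into (space M) T)"

definition bernoulli_shift_space :: "nat pmf \<Rightarrow> (int \<Rightarrow> nat) measure" where
  "bernoulli_shift_space p = PiM (UNIV :: int set) (\<lambda>_. measure_pmf p)"

definition shift :: "(int \<Rightarrow> 'b) \<Rightarrow> int \<Rightarrow> 'b" where
  "shift x = (\<lambda>i. x (i + 1))"

definition mpt_iso :: "'a measure \<Rightarrow> ('a \<Rightarrow> 'a) \<Rightarrow> 'b measure \<Rightarrow> ('b \<Rightarrow> 'b) \<Rightarrow> bool" where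
  "mpt_iso M T N U \<longleftrightarrow> (\<exists>X0 Y0 \<phi>.
     X0 \<in> sets M \<and> Y0 \<in> sets N \<and>
     emeasure M (space M - X0) = 0 \<and> emeasure N (space N - Y0) = 0 \<and>
     T ` X0 \<subseteq> X0 \<and> U ` Y0 \<subseteq> Y0 \<and>
     bij_betw \<phi> X0 Y0 \<and> (\<forall>x\<in>X0. \<phi> (T x) = U (\<phi> x)) \<and>
     \<phi> \<in> measurable (restrict_space M X0) (restrict_space N Y0) \<and>
     inv_into X0 \<phi> \<in> measurable (restrict_space N Y0) (restrict_space M X0) \<and>
     distr (restrict_space M X0) (restrict_space N Y0) \<phi> = restrict_space N Y0)"

definition bernoulli :: "'a measure \<Rightarrow> ('a \<Rightarrow> 'a) \<Rightarrow> bool" where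
  "bernoulli M T \<longleftrightarrow> prob_space M \<and> invertible_mpt M T \<and>
     (\<exists>p. finite (set_pmf p) \<and> mpt_iso M T (bernoulli_shift_space p) shift)"

definition zpow :: "'a measure \<Rightarrow> ('a \<Rightarrow> 'a) \<Rightarrow> int \<Rightarrow> 'a \<Rightarrow> 'a" where
  "zpow M T k = (if k \<ge> 0 then T ^^ nat k else (inv_into (space M) T) ^^ nat (- k))"

definition zpreimage :: "'a measure \<Rightarrow> ('a \<Rightarrow> 'a) \<Rightarrow> int \<Rightarrow> 'a set \<Rightarrow> 'a set" where
  "zpreimage M T k A = zpow M T k -` A \<inter> space M"

end

theory Submission
  imports Defs
begin

definition qq :: "nat pmf" where "qq = pmf_of_set {0,1}"
definition pp :: "nat pmf" where "pp = map_pmf prod_encode (pair_pmf qq qq)"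
definition MM :: "(int \<Rightarrow> nat) measure" where "MM = bernoulli_shift_space pp"
definition Cbit :: "bool \<Rightarrow> nat \<Rightarrow> nat" where
  "Cbit b s = (if b then snd (prod_decode s) else fst (prod_decode s))"
definition Cc :: "int \<times> bool \<Rightarrow> (int \<Rightarrow> nat) \<Rightarrow> nat" where
  "Cc j x = Cbit (snd j) (x (fst j))"
definition sw :: "nat \<Rightarrow> nat" where "sw z = (if z = 0 then 1 else if z = 1 then 0 else z)"
definition gf :: "bool \<Rightarrow> nat \<Rightarrow> nat" where "gf e z = (if e then sw z else z)"
definition Psi :: "(int \<times> bool \<Rightarrow> int \<times> bool) \<Rightarrow> (int \<times> bool \<Rightarrow> bool) \<Rightarrow> (int \<Rightarrow> nat) \<Rightarrow> (int \<Rightarrow> nat)" where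
  "Psi \<rho> \<epsilon> x = (\<lambda>i. prod_encode (gf (\<epsilon> (i,False)) (Cc (\<rho> (i,False)) x), gf (\<epsilon> (i,True)) (Cc (\<rho> (i,True)) x)))"

lemma Cc_Psi: "Cc j (Psi \<rho> \<epsilon> x) = gf (\<epsilon> j) (Cc (\<rho> j) x)"
  by (cases j) (auto simp: Cc_def Cbit_def Psi_def prod_encode_inverse)

lemma Cc_ext: "(\<And>j. Cc j x = Cc j y) \<Longrightarrow> x = y"
proof (rule ext)
  fix i assume h: "\<And>j. Cc j x = Cc j y"
  from h[of "(i,False)"] h[of "(i,True)"] have "prod_decode (x i) = prod_decode (y i)"
    by (simp add: Cc_def Cbit_def prod_eq_iff)
  then show "x i = y i" by (metis prod_decode_inverse)
qed

lemma gf_gf: "gf u (gf v z) = gf (u \<noteq> v) z" by (auto simp: gf_def sw_def)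

lemma Psi_comp: "Psi \<tau> \<delta> (Psi \<rho> \<epsilon> x) = Psi (\<rho> \<circ> \<tau>) (\<lambda>j. \<delta> j \<noteq> \<epsilon> (\<tau> j)) x"
  by (rule Cc_ext) (simp add: Cc_Psi gf_gf)

lemma Psi_id: "Psi id (\<lambda>_. False) x = x"
  by (rule Cc_ext) (simp add: Cc_Psi gf_def)

lemma Psi_inv1: "bij \<rho> \<Longrightarrow> Psi (inv \<rho>) (\<lambda>j. \<epsilon> (inv \<rho> j)) (Psi \<rho> \<epsilon> x) = x"
  apply (simp add: Psi_comp)
  apply (metis (no_types, lifting) Psi_id bij_is_surj surj_iff)
  done

lemma Psi_inv2: "bij \<rho> \<Longrightarrow> Psi \<rho> \<epsilon> (Psi (inv \<rho>) (\<lambda>j. \<epsilon> (inv \<rho> j)) x) = x"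
proof -
  assume b: "bij \<rho>"
  then have "inv \<rho> \<circ> \<rho> = id" using bij_is_inj inj_iff by blast
  moreover have "(\<lambda>j. \<epsilon> j \<noteq> \<epsilon> (inv \<rho> (\<rho> j))) = (\<lambda>_. False)"
    using b by (simp add: bij_is_inj)
  ultimately show ?thesis by (simp add: Psi_comp Psi_id)
qed

lemma Cc_shift: "Cc j (shift x) = Cc (fst j + 1, snd j) x"
  by (simp add: Cc_def shift_def)

lemma shift_Psi: "shift = Psi (\<lambda>(i,b). (i+1,b)) (\<lambda>_. False)"
  by (rule ext, rule Cc_ext) (simp add: Cc_Psi gf_def Cc_shift split: prod.splits)

lemma space_MM: "space MM = UNIV"
  by (simp add: MM_def bernoulli_shift_space_def space_PiM)

lemma sets_MM: "sets MM = sets (PiM UNIV (\<lambda>_::int. count_space (UNIV::nat set)))"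
  unfolding MM_def bernoulli_shift_space_def by (rule sets_PiM_cong) auto

lemma prob_MM: "prob_space MM"
  unfolding MM_def bernoulli_shift_space_def by (rule prob_space_PiM) (simp add: prob_space_measure_pmf)

lemma measure_MM_cyl:
  assumes "finite K"
  shows "measure MM {x. \<forall>k\<in>K. x k \<in> E k} = (\<Prod>k\<in>K. measure pp (E k))"
proof -
  interpret product_prob_space "\<lambda>_::int. measure_pmf pp" UNIV by unfold_locales
  have "emeasure (PiM UNIV (\<lambda>_::int. measure_pmf pp)) {x\<in>space (PiM UNIV (\<lambda>_::int. measure_pmf pp)). \<forall>k\<in>K. x k \<in> E k}
     = (\<Prod>k\<in>K. emeasure (measure_pmf pp) (E k))"
    by (rule emeasure_PiM_Collect) (use assms in auto)
  then have "emeasure MM {x. \<forall>k\<in>K. x k \<in> E k} = ennreal (\<Prod>k\<in>K. measure pp (E k))"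
    by (simp add: MM_def bernoulli_shift_space_def space_PiM prod_ennreal
        measure_pmf.emeasure_eq_measure)
  moreover have "emeasure MM {x. \<forall>k\<in>K. x k \<in> E k} = ennreal (measure MM {x. \<forall>k\<in>K. x k \<in> E k})"
    using prob_MM by (simp add: finite_measure.emeasure_eq_measure prob_space.finite_measure)
  ultimately show ?thesis by (simp add: prod_nonneg)
qed

lemma pp_rect: "measure pp {s. fst (prod_decode s) \<in> U \<and> snd (prod_decode s) \<in> V} = measure qq U * measure qq V"
proof -
  have "prod_encode -` {s. fst (prod_decode s) \<in> U \<and> snd (prod_decode s) \<in> V} = U \<times> V"
    by (auto simp: prod_encode_inverse)
  then show ?thesis by (simp add: pp_def measure_map_pmf measure_pmf_prob_product)
qed

lemma pp_bit: "measure pp {s. Cbit b s \<in> V} = measure qq V"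
  using pp_rect[of UNIV V] pp_rect[of V UNIV] by (cases b) (simp_all add: Cbit_def)

lemma rvC: "Cc j \<in> MM \<rightarrow>\<^sub>M count_space UNIV"
proof -
  have "(\<lambda>x. x (fst j)) \<in> MM \<rightarrow>\<^sub>M measure_pmf pp"
    unfolding MM_def bernoulli_shift_space_def by (rule measurable_component_singleton) simp
  moreover have "Cbit (snd j) \<in> measure_pmf pp \<rightarrow>\<^sub>M count_space UNIV"
    by (simp add: measurable_pmf_measure1)
  ultimately show ?thesis unfolding Cc_def by (rule measurable_compose[where f="\<lambda>x. x (fst j)"])
qed

lemma indepC: "prob_space.indep_vars MM (\<lambda>_. count_space UNIV) Cc UNIV"
proof -
  interpret prob_space MM by (rule prob_MM)
  show ?thesis
    unfolding indep_vars_def2 indep_sets_def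
  proof (intro conjI ballI allI impI)
    show "random_variable (count_space UNIV) (Cc j)" for j by (rule rvC)
    show "{Cc j -` A \<inter> space MM |A. A \<in> sets (count_space UNIV)} \<subseteq> events" for j
      using rvC measurable_sets by blast
    fix J :: "(int \<times> bool) set" and A
    assume J: "J \<subseteq> UNIV" "J \<noteq> {}" "finite J" and A: "A \<in> Pi J (\<lambda>j. {Cc j -` A \<inter> space MM |A. A \<in> sets (count_space UNIV)})"
    then have "\<forall>j\<in>J. \<exists>B. A j = Cc j -` B \<inter> space MM" by auto
    then obtain B where B: "\<And>j. j \<in> J \<Longrightarrow> A j = Cc j -` B j \<inter> space MM" by metis
    define U where "U k b = (if (k,b) \<in> J then B (k,b) else UNIV)" for k b
    define E where "E k = {s. fst (prod_decode s) \<in> U k False \<and> snd (prod_decode s) \<in> U k True}" for k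
    have inter: "(\<Inter>j\<in>J. A j) = {x. \<forall>k\<in>fst ` J. x k \<in> E k}"
    proof (intro set_eqI iffI)
      fix x assume "x \<in> (\<Inter>j\<in>J. A j)"
      then have "\<forall>j\<in>J. Cbit (snd j) (x (fst j)) \<in> B j"
      proof (intro ballI)
        fix j assume xi: "x \<in> (\<Inter>j\<in>J. A j)" and j: "j \<in> J"
        then have "x \<in> A j" by blast
        then show "Cbit (snd j) (x (fst j)) \<in> B j" using B[OF j] by (simp add: Cc_def)
      qed
      then show "x \<in> {x. \<forall>k\<in>fst ` J. x k \<in> E k}"
        by (auto simp: E_def U_def Cbit_def)
    next
      fix x assume x: "x \<in> {x. \<forall>k\<in>fst ` J. x k \<in> E k}"
      show "x \<in> (\<Inter>j\<in>J. A j)"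
      proof
        fix j assume j: "j \<in> J"
        obtain k b where kb: "j = (k,b)" by fastforce
        with x j have "x k \<in> E k" by force
        with j kb show "x \<in> A j" by (cases b) (auto simp: B space_MM Cc_def Cbit_def E_def U_def)
      qed
    qed
    have pA: "prob (A j) = measure qq (U (fst j) (snd j))" if "j \<in> J" for j
    proof -
      have "A j = {x. \<forall>k\<in>{fst j}. x k \<in> {s. Cbit (snd j) s \<in> B j}}"
        using that by (auto simp: B space_MM Cc_def)
      then have "prob (A j) = (\<Prod>k\<in>{fst j}. measure pp {s. Cbit (snd j) s \<in> B j})"
        using measure_MM_cyl[of "{fst j}" "\<lambda>_. {s. Cbit (snd j) s \<in> B j}"] by simp
      then show ?thesis using that pp_bit[of "snd j" "B j"] by (simp add: U_def)
    qed
    have pE: "measure pp (E k) = measure qq (U k False) * measure qq (U k True)" for k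
      unfolding E_def by (rule pp_rect)
    have "prob (\<Inter>j\<in>J. A j) = measure MM {x. \<forall>k\<in>fst ` J. x k \<in> E k}"
      by (simp only: inter)
    also have "\<dots> = (\<Prod>k\<in>fst ` J. measure pp (E k))"
      using J by (intro measure_MM_cyl) simp
    also have "\<dots> = (\<Prod>k\<in>fst ` J. measure qq (U k False) * measure qq (U k True))"
      by (simp only: pE)
    also have "\<dots> = (\<Prod>k\<in>fst ` J. \<Prod>b\<in>UNIV. measure qq (U k b))"
      by (simp add: UNIV_bool)
    also have "\<dots> = (\<Prod>j\<in>fst ` J \<times> UNIV. measure qq (U (fst j) (snd j)))"
      by (simp add: prod.cartesian_product split_def)
    also have "\<dots> = (\<Prod>j\<in>J. measure qq (U (fst j) (snd j)))"
    proof (rule prod.mono_neutral_right)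
      show "finite (fst ` J \<times> (UNIV :: bool set))" using J by simp
      show "J \<subseteq> fst ` J \<times> UNIV" by force
      show "\<forall>j\<in>fst ` J \<times> UNIV - J. measure qq (U (fst j) (snd j)) = 1"
        by (auto simp: U_def)
    qed
    also have "\<dots> = (\<Prod>j\<in>J. prob (A j))"
      by (rule prod.cong) (simp_all add: pA)
    finally show "prob (\<Inter>j\<in>J. A j) = (\<Prod>j\<in>J. prob (A j))" .
  qed
qed

definition psi :: "(int \<times> bool \<Rightarrow> int \<times> bool) \<Rightarrow> (int \<times> bool \<Rightarrow> bool) \<Rightarrow> int \<Rightarrow> (int \<Rightarrow> nat) \<Rightarrow> nat" where
  "psi \<rho> \<epsilon> i x = prod_encode (gf (\<epsilon> (i,False)) (Cc (\<rho> (i,False)) x), gf (\<epsilon> (i,True)) (Cc (\<rho> (i,True)) x))"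

lemma Psi_psi: "Psi \<rho> \<epsilon> x = (\<lambda>i\<in>UNIV. psi \<rho> \<epsilon> i x)"
  by (simp add: Psi_def psi_def fun_eq_iff)

lemma Psi_psi': "Psi \<rho> \<epsilon> = (\<lambda>x. \<lambda>i\<in>UNIV. psi \<rho> \<epsilon> i x)"
  by (rule ext) (rule Psi_psi)

lemma count_pair: "count_space (UNIV::nat set) \<Otimes>\<^sub>M count_space (UNIV::nat set) = count_space UNIV"
  by (simp add: pair_measure_countable)

lemma meas_from_count_pair: "(f :: nat \<times> nat \<Rightarrow> nat) \<in> count_space UNIV \<Otimes>\<^sub>M count_space UNIV \<rightarrow>\<^sub>M count_space UNIV"
  by (simp add: count_pair)

lemma rv_psi: "psi \<rho> \<epsilon> i \<in> MM \<rightarrow>\<^sub>M count_space UNIV"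
proof -
  have "(\<lambda>x. (Cc (\<rho> (i,False)) x, Cc (\<rho> (i,True)) x)) \<in> MM \<rightarrow>\<^sub>M count_space UNIV \<Otimes>\<^sub>M count_space UNIV"
    by (intro measurable_Pair rvC)
  from measurable_compose[OF this meas_from_count_pair[of "\<lambda>(u,v). prod_encode (gf (\<epsilon> (i,False)) u, gf (\<epsilon> (i,True)) v)"]]
  show ?thesis by (simp add: psi_def[abs_def] split_def)
qed

lemma indep_psi:
  assumes "inj \<rho>"
  shows "prob_space.indep_vars MM (\<lambda>_. count_space UNIV) (\<lambda>i. psi \<rho> \<epsilon> i) UNIV"
proof -
  interpret prob_space MM by (rule prob_MM)
  define K where "K i = {\<rho> (i,False), \<rho> (i,True)}" for i
  have disj: "disjoint_family_on K UNIV"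
    unfolding disjoint_family_on_def K_def using assms by (auto simp: inj_eq)
  have ind: "indep_vars (\<lambda>i. PiM (K i) (\<lambda>_. count_space UNIV)) (\<lambda>i \<omega>. restrict (\<lambda>j. Cc j \<omega>) (K i)) UNIV"
    by (rule indep_vars_restrict[OF indepC _ disj]) simp
  define Y where "Y i f = prod_encode (gf (\<epsilon> (i,False)) (f (\<rho> (i,False))), gf (\<epsilon> (i,True)) (f (\<rho> (i,True))))" for i and f :: "int \<times> bool \<Rightarrow> nat"
  have mY: "Y i \<in> PiM (K i) (\<lambda>_. count_space UNIV) \<rightarrow>\<^sub>M count_space UNIV" for i
  proof -
    have "(\<lambda>f. (f (\<rho> (i,False)), f (\<rho> (i,True)))) \<in> PiM (K i) (\<lambda>_. count_space (UNIV::nat set)) \<rightarrow>\<^sub>M count_space UNIV \<Otimes>\<^sub>M count_space UNIV"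
      by (intro measurable_Pair measurable_component_singleton) (auto simp: K_def)
    from measurable_compose[OF this meas_from_count_pair[of "\<lambda>(u,v). prod_encode (gf (\<epsilon> (i,False)) u, gf (\<epsilon> (i,True)) v)"]]
    moreover have "Y i = (\<lambda>f. prod_encode (gf (\<epsilon> (i,False)) (f (\<rho> (i,False))), gf (\<epsilon> (i,True)) (f (\<rho> (i,True)))))"
      by (simp add: Y_def fun_eq_iff)
    ultimately show ?thesis by (simp add: split_def)
  qed
  have "indep_vars (\<lambda>_. count_space UNIV) (\<lambda>i \<omega>. Y i (restrict (\<lambda>j. Cc j \<omega>) (K i))) UNIV"
    by (rule indep_vars_compose2[OF ind mY])
  moreover have "(\<lambda>\<omega>. Y i (restrict (\<lambda>j. Cc j \<omega>) (K i))) = psi \<rho> \<epsilon> i" for i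
    by (auto simp: Y_def K_def psi_def)
  ultimately show ?thesis by simp
qed

lemma gf_eq: "gf e a = b \<longleftrightarrow> a = gf e b" by (auto simp: gf_def sw_def)

lemma pmf_qq_gf: "pmf qq (gf e z) = pmf qq z"
  by (auto simp: qq_def gf_def sw_def)

lemma prob_Cc_single: "measure MM (Cc j -` {w}) = pmf qq w"
proof -
  have "Cc j -` {w} = {x. \<forall>k\<in>{fst j}. x k \<in> {s. Cbit (snd j) s \<in> {w}}}"
    by (auto simp: Cc_def)
  then have "measure MM (Cc j -` {w}) = (\<Prod>k\<in>{fst j}. measure pp {s. Cbit (snd j) s \<in> {w}})"
    using measure_MM_cyl[of "{fst j}" "\<lambda>_. {s. Cbit (snd j) s \<in> {w}}"] by simp
  then show ?thesis using pp_bit[of "snd j" "{w}"] by (simp add: measure_pmf_single)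
qed

lemma law_psi:
  assumes "inj \<rho>"
  shows "distr MM (count_space UNIV) (psi \<rho> \<epsilon> i) = measure_pmf pp"
proof (rule measure_eqI_countable)
  interpret prob_space MM by (rule prob_MM)
  show "sets (distr MM (count_space UNIV) (psi \<rho> \<epsilon> i)) = Pow UNIV" by simp
  show "sets (measure_pmf pp) = Pow UNIV" by simp
  show "countable (UNIV :: nat set)" by simp
  fix v :: nat
  define j1 where "j1 = \<rho> (i,False)"
  define j2 where "j2 = \<rho> (i,True)"
  have j12: "j1 \<noteq> j2" using assms by (auto simp: j1_def j2_def inj_eq)
  define u where "u = gf (\<epsilon> (i,False)) (fst (prod_decode v))"
  define w where "w = gf (\<epsilon> (i,True)) (snd (prod_decode v))"
  define Aj where "Aj j = (if j = j1 then {u} else {w})" for j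
  have set_eq: "psi \<rho> \<epsilon> i -` {v} \<inter> space MM = (\<Inter>j\<in>{j1,j2}. Cc j -` Aj j \<inter> space MM)"
  proof -
    have "psi \<rho> \<epsilon> i x = v \<longleftrightarrow> Cc j1 x = u \<and> Cc j2 x = w" for x
    proof -
      have "psi \<rho> \<epsilon> i x = v \<longleftrightarrow> prod_decode (psi \<rho> \<epsilon> i x) = prod_decode v"
        by (metis prod_decode_inverse)
      also have "\<dots> \<longleftrightarrow> gf (\<epsilon> (i,False)) (Cc j1 x) = fst (prod_decode v) \<and> gf (\<epsilon> (i,True)) (Cc j2 x) = snd (prod_decode v)"
        by (auto simp: psi_def j1_def j2_def prod_encode_inverse prod_eq_iff)
      also have "\<dots> \<longleftrightarrow> Cc j1 x = u \<and> Cc j2 x = w"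
        unfolding u_def w_def gf_eq by blast
      finally show ?thesis .
    qed
    then show ?thesis using j12 by (auto simp: Aj_def space_MM)
  qed
  have "prob (\<Inter>j\<in>{j1,j2}. Cc j -` Aj j \<inter> space MM) = (\<Prod>j\<in>{j1,j2}. prob (Cc j -` Aj j \<inter> space MM))"
    by (rule indep_varsD[OF indepC]) auto
  also have "\<dots> = pmf qq u * pmf qq w"
    using j12 by (simp add: Aj_def space_MM prob_Cc_single)
  also have "\<dots> = pmf pp v"
  proof -
    have "pmf pp v = pmf (pair_pmf qq qq) (prod_decode v)"
      unfolding pp_def by (metis inj_prod_encode pmf_map_inj' prod_decode_inverse)
    obtain a b where ab: "prod_decode v = (a,b)" by fastforce
    show ?thesis using \<open>pmf pp v = _\<close> by (simp add: u_def w_def pmf_qq_gf pmf_pair ab)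
  qed
  finally have "prob (psi \<rho> \<epsilon> i -` {v} \<inter> space MM) = pmf pp v" by (simp add: set_eq)
  then show "emeasure (distr MM (count_space UNIV) (psi \<rho> \<epsilon> i)) {v} = emeasure (measure_pmf pp) {v}"
    by (simp add: emeasure_distr rv_psi emeasure_eq_measure emeasure_pmf_single)
qed

lemma distr_Psi:
  assumes "inj \<rho>"
  shows "distr MM MM (Psi \<rho> \<epsilon>) = MM" and "Psi \<rho> \<epsilon> \<in> MM \<rightarrow>\<^sub>M MM"
proof -
  interpret prob_space MM by (rule prob_MM)
  have "distr MM (PiM UNIV (\<lambda>_. count_space UNIV)) (\<lambda>x. \<lambda>i\<in>UNIV. psi \<rho> \<epsilon> i x)
      = PiM UNIV (\<lambda>i. distr MM (count_space UNIV) (psi \<rho> \<epsilon> i))"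
    using indep_vars_iff_distr_eq_PiM[where I=UNIV and M'="\<lambda>_. count_space UNIV" and X="\<lambda>i. psi \<rho> \<epsilon> i"] indep_psi[OF assms] rv_psi
    by simp
  also have "\<dots> = PiM UNIV (\<lambda>_. measure_pmf pp)"
    using law_psi[OF assms] by simp
  also have "\<dots> = MM"
    by (simp add: MM_def bernoulli_shift_space_def)
  finally have *: "distr MM (PiM UNIV (\<lambda>_. count_space UNIV)) (\<lambda>x. \<lambda>i\<in>UNIV. psi \<rho> \<epsilon> i x) = MM" .
  have "distr MM MM (Psi \<rho> \<epsilon>) = distr MM (PiM UNIV (\<lambda>_. count_space UNIV)) (\<lambda>x. \<lambda>i\<in>UNIV. psi \<rho> \<epsilon> i x)"
    by (rule distr_cong) (simp_all add: sets_MM Psi_psi)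
  with * show "distr MM MM (Psi \<rho> \<epsilon>) = MM" by simp
  have "(\<lambda>x. \<lambda>i\<in>UNIV. psi \<rho> \<epsilon> i x) \<in> MM \<rightarrow>\<^sub>M PiM UNIV (\<lambda>_. count_space UNIV)"
    by (rule measurable_restrict) (rule rv_psi)
  then show "Psi \<rho> \<epsilon> \<in> MM \<rightarrow>\<^sub>M MM"
    by (simp add: Psi_psi' measurable_cong_sets[OF refl sets_MM])
qed

lemma inj_Psi: "bij \<rho> \<Longrightarrow> inj (Psi \<rho> \<epsilon>)"
  by (rule inj_on_inverseI[where g="Psi (inv \<rho>) (\<lambda>j. \<epsilon> (inv \<rho> j))"]) (rule Psi_inv1)

lemma inv_Psi: "bij \<rho> \<Longrightarrow> inv_into UNIV (Psi \<rho> \<epsilon>) = Psi (inv \<rho>) (\<lambda>j. \<epsilon> (inv \<rho> j))"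
  by (rule ext, rule inv_into_f_eq) (simp_all add: inj_Psi Psi_inv2)

lemma bij_Psi: assumes "bij \<rho>" shows "bij (Psi \<rho> \<epsilon>)"
  using inj_Psi[OF assms] surjI[of "Psi \<rho> \<epsilon>" "Psi (inv \<rho>) (\<lambda>j. \<epsilon> (inv \<rho> j))", OF Psi_inv2[OF assms]]
  by (simp add: bij_def)

lemma mpt_Psi: "bij \<rho> \<Longrightarrow> mpt MM (Psi \<rho> \<epsilon>)"
  unfolding mpt_def using distr_Psi[OF bij_is_inj] by simp

lemma invmpt_Psi: "bij \<rho> \<Longrightarrow> invertible_mpt MM (Psi \<rho> \<epsilon>)"
  unfolding invertible_mpt_def space_MM
  using mpt_Psi bij_Psi inv_Psi bij_imp_bij_inv by metis

lemma UNIV_MM: "UNIV \<in> sets MM" by (metis sets.top space_MM)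

lemma rs_MM: "restrict_space MM UNIV = MM"
proof (rule measure_eqI)
  show "sets (restrict_space MM UNIV) = sets MM" by (auto simp: sets_restrict_space)
  fix A assume "A \<in> sets (restrict_space MM UNIV)"
  then show "emeasure (restrict_space MM UNIV) A = emeasure MM A"
    by (subst emeasure_restrict_space) (simp_all add: space_MM UNIV_MM)
qed

lemma finite_pp: "finite (set_pmf pp)"
  by (simp add: pp_def qq_def)

lemma bern_Psi:
  assumes "bij \<rho>" "bij \<sigma>" "\<And>x. Psi \<sigma> \<delta> (Psi \<rho> \<epsilon> x) = shift (Psi \<sigma> \<delta> x)"
  shows "bernoulli MM (Psi \<rho> \<epsilon>)"
proof -
  have iso: "mpt_iso MM (Psi \<rho> \<epsilon>) (bernoulli_shift_space pp) shift"
    unfolding mpt_iso_def MM_def[symmetric]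
  proof (intro exI[of _ UNIV] exI[of _ "Psi \<sigma> \<delta>"] conjI)
    show "UNIV \<in> sets MM" by (metis sets.top space_MM)
    show "emeasure MM (space MM - UNIV) = 0" by simp
    show "emeasure MM (space MM - UNIV) = 0" by simp
    show "UNIV \<in> sets MM" by (metis sets.top space_MM)
    show "Psi \<rho> \<epsilon> ` UNIV \<subseteq> UNIV" "shift ` UNIV \<subseteq> UNIV" by simp_all
    show "bij_betw (Psi \<sigma> \<delta>) UNIV UNIV" using bij_Psi[OF assms(2)] .
    show "\<forall>x\<in>UNIV. Psi \<sigma> \<delta> (Psi \<rho> \<epsilon> x) = shift (Psi \<sigma> \<delta> x)" using assms(3) by simp
    show "Psi \<sigma> \<delta> \<in> restrict_space MM UNIV \<rightarrow>\<^sub>M restrict_space MM UNIV"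
      using distr_Psi(2)[OF bij_is_inj[OF assms(2)]] by (simp add: rs_MM)
    show "inv_into UNIV (Psi \<sigma> \<delta>) \<in> restrict_space MM UNIV \<rightarrow>\<^sub>M restrict_space MM UNIV"
      using distr_Psi(2)[OF bij_is_inj[OF bij_imp_bij_inv[OF assms(2)]]] by (simp add: rs_MM inv_Psi[OF assms(2)])
    show "distr (restrict_space MM UNIV) (restrict_space MM UNIV) (Psi \<sigma> \<delta>) = restrict_space MM UNIV"
      using distr_Psi(1)[OF bij_is_inj[OF assms(2)]] by (simp add: rs_MM)
  qed
  show ?thesis
    unfolding bernoulli_def using prob_MM invmpt_Psi[OF assms(1)] finite_pp iso by blast
qed

definition sh :: "int \<times> bool \<Rightarrow> int \<times> bool" where "sh j = (fst j + 1, snd j)"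

lemma bij_sh: "bij sh"
  by (rule o_bij[where g="\<lambda>j. (fst j - 1, snd j)"]) (auto simp: sh_def fun_eq_iff)

lemma shift_Psi': "shift = Psi sh (\<lambda>_. False)"
  by (rule ext, rule Cc_ext) (simp add: Cc_Psi gf_def Cc_shift sh_def)

lemma bern_shift: "bernoulli MM shift"
  unfolding shift_Psi'
  by (rule bern_Psi[where \<sigma>=id and \<delta>="\<lambda>_. False"]) (simp_all add: bij_sh Psi_id shift_Psi')

definition unshift :: "(int \<Rightarrow> nat) \<Rightarrow> int \<Rightarrow> nat" where "unshift x = (\<lambda>i. x (i - 1))"

lemma zpow_conj:
  assumes GH: "\<And>x. G (H x) = x" "\<And>x. H (G x) = x"
    and VV: "\<And>x. V (V' x) = x" "\<And>x. V' (V x) = x"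
    and sp: "space M = UNIV"
  shows "zpow M (\<lambda>x. G (V (H x))) k = (\<lambda>x. G (zpow M V k (H x)))"
proof -
  let ?U = "\<lambda>x. G (V (H x))"
  have injU: "inj ?U" by (rule inj_on_inverseI[where g="\<lambda>x. G (V' (H x))"]) (simp add: GH VV)
  have invU: "inv_into UNIV ?U = (\<lambda>x. G (V' (H x)))"
    by (rule ext, rule inv_into_f_eq[OF injU]) (simp_all add: GH VV)
  have injV: "inj V" by (rule inj_on_inverseI[where g=V']) (simp add: VV)
  have invV: "inv_into UNIV V = V'"
    by (rule ext, rule inv_into_f_eq[OF injV]) (simp_all add: VV)
  have p1: "(?U ^^ n) = (\<lambda>x. G ((V ^^ n) (H x)))" for n
    by (induction n) (simp_all add: GH fun_eq_iff)
  have p2: "((\<lambda>x. G (V' (H x))) ^^ n) = (\<lambda>x. G ((V' ^^ n) (H x)))" for n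
    by (induction n) (simp_all add: GH fun_eq_iff)
  show ?thesis
    unfolding zpow_def sp invU invV by (simp add: p1 p2)
qed

lemma shift_pow: "(shift ^^ n) x = (\<lambda>i. x (i + int n))"
  by (induction n arbitrary: x) (simp_all add: shift_def algebra_simps)

lemma unshift_pow: "(unshift ^^ n) x = (\<lambda>i. x (i - int n))"
  by (induction n arbitrary: x) (simp_all add: unshift_def algebra_simps)

lemma inv_shift: "inv_into UNIV shift = unshift"
proof -
  have inj: "inj (shift :: (int \<Rightarrow> nat) \<Rightarrow> _)"
    by (rule inj_on_inverseI[where g=unshift]) (simp add: shift_def unshift_def)
  show ?thesis
    by (rule ext, rule inv_into_f_eq[OF inj]) (simp_all add: shift_def unshift_def)
qed

lemma zpow_shift: "zpow MM shift k x = (\<lambda>i. x (i + k))"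
  unfolding zpow_def space_MM inv_shift by (simp add: shift_pow unshift_pow)

lemma shift_unshift: "shift (unshift x) = x" "unshift (shift x) = x"
  by (simp_all add: shift_def unshift_def)

lemma inf_rangeT: "infinite (range (\<lambda>k::int. (k, True)))"
proof
  assume "finite (range (\<lambda>k::int. (k, True)))"
  moreover have "inj (\<lambda>k::int. (k, True))" by (simp add: inj_def)
  ultimately have "finite (UNIV :: int set)" using finite_imageD by blast
  then show False by simp
qed

lemma exists_rho:
  fixes a b :: "nat \<Rightarrow> int" and F :: "nat set"
  assumes a: "inj a" and b: "inj b" and a0: "\<forall>n. a n \<noteq> 0" and b0: "\<forall>n. b n \<noteq> 0"
  shows "\<exists>\<rho>. bij \<rho> \<and> \<rho> (0,False) = (0,False) \<and> (\<forall>n\<in>F. \<rho> (b n,False) = (a n,False))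
             \<and> (\<forall>n. n \<notin> F \<longrightarrow> \<rho> (b n,False) = (b n,True))"
proof -
  define D where "D = insert (0,False) (range (\<lambda>n. (b n, False)))"
  define f where "f j = (if j = (0,False) then (0,False) else if inv b (fst j) \<in> F
      then (a (inv b (fst j)), False) else (b (inv b (fst j)), True))" for j :: "int \<times> bool"
  have f0: "f (0,False) = (0,False)" by (simp add: f_def)
  have fb: "f (b n, False) = (if n \<in> F then (a n, False) else (b n, True))" for n
    using b0 b by (auto simp: f_def inv_f_f)
  have injf: "inj_on f D"
    unfolding D_def inj_on_def using a0 b0
    by (auto simp: f0 fb inj_eq[OF a] inj_eq[OF b] split: if_splits)
  define R where "R = f ` D"
  have R: "R = insert (0,False) ((\<lambda>n. (a n, False)) ` F \<union> (\<lambda>n. (b n, True)) ` (- F))"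
  proof (intro equalityI subsetI)
    fix j assume "j \<in> R"
    then show "j \<in> insert (0,False) ((\<lambda>n. (a n, False)) ` F \<union> (\<lambda>n. (b n, True)) ` (- F))"
      unfolding R_def D_def by (auto simp: f0 fb)
  next
    fix j assume j: "j \<in> insert (0,False) ((\<lambda>n. (a n, False)) ` F \<union> (\<lambda>n. (b n, True)) ` (- F))"
    have "(0,False) \<in> R" unfolding R_def D_def using f0 by (metis image_eqI insertI1)
    moreover have "(a n, False) \<in> R" if "n \<in> F" for n
      unfolding R_def D_def by (rule rev_image_eqI[of "(b n, False)"]) (simp_all add: fb that)
    moreover have "(b n, True) \<in> R" if "n \<notin> F" for n
      unfolding R_def D_def by (rule rev_image_eqI[of "(b n, False)"]) (simp_all add: fb that)
    ultimately show "j \<in> R" using j by auto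
  qed
  have cnt: "countable (X :: (int \<times> bool) set)" for X by simp
  have infD: "infinite (UNIV - D)"
  proof -
    have "range (\<lambda>k::int. (k, True)) \<subseteq> UNIV - D" by (auto simp: D_def)
    moreover have "infinite (range (\<lambda>k::int. (k, True)))" by (rule inf_rangeT)
    ultimately show ?thesis using infinite_super by blast
  qed
  have infR: "infinite (UNIV - R)"
  proof (cases "finite (- F)")
    case True
    have "range (\<lambda>k::int. (k, True)) - (\<lambda>n. (b n, True)) ` (- F) \<subseteq> UNIV - R" by (auto simp: R)
    moreover have "infinite (range (\<lambda>k::int. (k, True)) - (\<lambda>n. (b n, True)) ` (- F))"
      using True inf_rangeT by (intro Diff_infinite_finite) simp_all
    ultimately show ?thesis using infinite_super by blast
  next
    case False
    have "(\<lambda>n. (a n, False)) ` (- F) \<subseteq> UNIV - R"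
      using a0 by (auto simp: R inj_eq[OF a])
    moreover have "infinite ((\<lambda>n. (a n, False)) ` (- F))"
      using False by (subst finite_image_iff) (simp_all add: inj_on_def inj_eq[OF a])
    ultimately show ?thesis using infinite_super by blast
  qed
  obtain e1 where e1: "bij_betw e1 (UNIV - D) (UNIV :: nat set)"
    using countableE_infinite[OF cnt infD] by blast
  obtain e2 where e2: "bij_betw e2 (UNIV - R) (UNIV :: nat set)"
    using countableE_infinite[OF cnt infR] by blast
  define e where "e j = inv_into (UNIV - R) e2 (e1 j)" for j
  have be: "bij_betw e (UNIV - D) (UNIV - R)"
    unfolding e_def using bij_betw_trans[OF e1 bij_betw_inv_into[OF e2]] by (simp add: comp_def)
  define \<rho> where "\<rho> j = (if j \<in> D then f j else e j)" for j
  have b1: "bij_betw \<rho> D R"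
    unfolding R_def using injf by (simp add: bij_betw_cong[of D \<rho> f] \<rho>_def inj_on_imp_bij_betw)
  have b2: "bij_betw \<rho> (UNIV - D) (UNIV - R)"
  proof -
    have "bij_betw \<rho> (UNIV - D) (UNIV - R) = bij_betw e (UNIV - D) (UNIV - R)"
      by (rule bij_betw_cong) (simp add: \<rho>_def)
    then show ?thesis using be by simp
  qed
  have "bij_betw \<rho> (D \<union> (UNIV - D)) (R \<union> (UNIV - R))"
    by (rule bij_betw_combine[OF b1 b2]) auto
  then have "bij \<rho>" by simp
  moreover have "\<rho> (0,False) = (0,False)" by (simp add: \<rho>_def D_def f0)
  moreover have "\<forall>n\<in>F. \<rho> (b n,False) = (a n,False)" by (simp add: \<rho>_def D_def fb)
  moreover have "\<forall>n. n \<notin> F \<longrightarrow> \<rho> (b n,False) = (b n,True)" by (simp add: \<rho>_def D_def fb)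
  ultimately show ?thesis by blast
qed

lemma pmf_qq1: "pmf qq 1 = 1/2" "pmf qq (Suc 0) = 1/2" by (simp_all add: qq_def)

theorem lemma4p1:
  fixes a b :: "nat \<Rightarrow> int" and F :: "nat set"
  assumes "inj a" and "inj b" and "\<forall>n. a n \<noteq> 0" and "\<forall>n. b n \<noteq> 0"
  shows "\<exists>(M :: (int \<Rightarrow> nat) measure) T S A.
           prob_space M \<and> bernoulli M T \<and> bernoulli M S \<and> A \<in> sets M \<and>
           (\<forall>n. measure M (zpreimage M T (a n) A \<inter> zpreimage M S (b n) A)
                 = (if n \<in> F then 0 else 1 / 4))"
proof -
  obtain \<rho> where \<rho>: "bij \<rho>" "\<rho> (0,False) = (0,False)" "\<forall>n\<in>F. \<rho> (b n,False) = (a n,False)"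
      "\<forall>n. n \<notin> F \<longrightarrow> \<rho> (b n,False) = (b n,True)"
    using exists_rho[OF assms] by blast
  define \<epsilon> where "\<epsilon> j = (\<exists>n\<in>F. j = (b n, False))" for j
  define \<Phi> where "\<Phi> = Psi \<rho> \<epsilon>"
  define \<Phi>i where "\<Phi>i = Psi (inv \<rho>) (\<lambda>j. \<epsilon> (inv \<rho> j))"
  define S where "S = (\<lambda>x. \<Phi>i (shift (\<Phi> x)))"
  define A where "A = {x :: int \<Rightarrow> nat. Cc (0,False) x = 1}"
  have inv\<rho>0: "inv \<rho> (0,False) = (0,False)" using \<rho>(1,2) by (metis bij_is_inj inv_f_f)
  have \<epsilon>0: "\<not> \<epsilon> (0,False)" using assms(4) by (auto simp: \<epsilon>_def)
  define \<sigma> where "\<sigma> = \<rho> \<circ> sh \<circ> inv \<rho>"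
  define \<delta> where "\<delta> = (\<lambda>j. \<epsilon> (inv \<rho> j) \<noteq> (False \<noteq> \<epsilon> (sh (inv \<rho> j))))"
  have Sform: "S = Psi \<sigma> \<delta>"
    by (simp add: S_def \<Phi>_def \<Phi>i_def \<sigma>_def \<delta>_def shift_Psi' Psi_comp fun_eq_iff o_assoc)
  have b\<sigma>: "bij \<sigma>" unfolding \<sigma>_def by (intro bij_comp bij_sh \<rho>(1) bij_imp_bij_inv)
  have cond: "\<And>x. Psi \<rho> \<epsilon> (S x) = shift (Psi \<rho> \<epsilon> x)"
    by (simp add: S_def \<Phi>_def \<Phi>i_def Psi_inv2[OF \<rho>(1)])
  have bS: "bernoulli MM S"
    unfolding Sform by (rule bern_Psi[OF b\<sigma> \<rho>(1)]) (use cond Sform in simp)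
  have zS: "zpow MM S k = (\<lambda>x. \<Phi>i (zpow MM shift k (\<Phi> x)))" for k
    unfolding S_def
    by (rule zpow_conj[where V'=unshift]) (simp_all add: \<Phi>_def \<Phi>i_def Psi_inv1[OF \<rho>(1)] Psi_inv2[OF \<rho>(1)] shift_unshift space_MM)
  have C0: "Cc (0,False) (\<Phi>i y) = Cc (0,False) y" for y
    by (simp add: \<Phi>i_def Cc_Psi inv\<rho>0 \<epsilon>0 gf_def)
  have Ck: "Cc (0,False) (\<lambda>i. z (i + k)) = Cc (k,False) z" for z :: "int \<Rightarrow> nat" and k
    by (simp add: Cc_def)
  have zpT: "zpreimage MM shift (a n) A = {x. Cc (a n,False) x = 1}" for n
    by (simp add: zpreimage_def zpow_shift A_def space_MM Ck)
  have zpS: "zpreimage MM S (b n) A = {x. gf (\<epsilon> (b n,False)) (Cc (\<rho> (b n,False)) x) = 1}" for n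
    by (simp add: zpreimage_def zS zpow_shift A_def space_MM C0 Ck \<Phi>_def Cc_Psi)
  have meas: "measure MM (zpreimage MM shift (a n) A \<inter> zpreimage MM S (b n) A) = (if n \<in> F then 0 else 1 / 4)" for n
  proof (cases "n \<in> F")
    case True
    then have "\<epsilon> (b n, False)" by (auto simp: \<epsilon>_def)
    then have "zpreimage MM shift (a n) A \<inter> zpreimage MM S (b n) A = {}"
      using True \<rho>(3) by (auto simp: zpT zpS gf_def sw_def)
    then show ?thesis using True by simp
  next
    case False
    then have "\<not> \<epsilon> (b n, False)" using assms(2) by (auto simp: \<epsilon>_def inj_eq)
    then have eq: "zpreimage MM shift (a n) A \<inter> zpreimage MM S (b n) A
        = (\<Inter>j\<in>{(a n,False),(b n,True)}. Cc j -` {1} \<inter> space MM)"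
      using False \<rho>(4) by (auto simp: zpT zpS gf_def space_MM)
    interpret prob_space MM by (rule prob_MM)
    have "prob (\<Inter>j\<in>{(a n,False),(b n,True)}. Cc j -` {1} \<inter> space MM)
        = (\<Prod>j\<in>{(a n,False),(b n,True)}. prob (Cc j -` {1} \<inter> space MM))"
      by (rule indep_varsD[OF indepC]) auto
    also have "\<dots> = 1/4"
      by (simp add: space_MM prob_Cc_single pmf_qq1)
    finally show ?thesis using False eq by simp
  qed
  have AM: "A \<in> sets MM"
  proof -
    have "Cc (0,False) -` {1} \<inter> space MM \<in> sets MM"
      by (rule measurable_sets[OF rvC]) simp
    then show ?thesis by (simp add: A_def space_MM vimage_def)
  qed
  show ?thesis
    using prob_MM bern_shift bS AM meas by blast
qed

end
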